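(* Let $\rho:\Omega\to(0,1)$ be a random variable such that for every $r\in\mathbb N$ there is a $\sigma\{X_j:|j|\le r\}$-measurable random variable $\rho_r$ with $\|\rho-\rho_r\|_{L^\infty(\mathbb P)}\le\beta_r$, where $\beta_r\to0$, and assume $\psi_U(s)<\frac1{\mathbb E_{\mathbb P}[\rho]}-1$ for some $s$. Let $R_n(\omega)=\sum_{j=0}^{n-1}\rho(\theta^j\omega)\rho(\theta^{j+1}\omega)\cdots\rho(\theta^{n-1}\omega)$ and, for integers $0\le m\le n$, $R_{m,n}(\omega)=\sum_{m\le k\le j\le n}\rho(\theta^k\omega)\cdots\rho(\theta^j\omega)$. Then: (i) for every $p\in\mathbb N$ there is $C_p<\infty$ with $\mathbb E_{\mathbb P}[R_n^p]\le C_p$ for all $n$; consequently, for every $\varepsilon>0$, $R_n(\omega)=o(n^\varepsilon)$ for $\mathbb P$-a.e. $\omega$; (ii) for every $\varepsilon>0$ and $p\in\mathbb N$ there is $C_{p,\varepsilon}<\infty$ such that for all $\ell\in\mathbb N$, $$\mathbb E_{\mathbb P}\Big[\sup_{(n,m):\,n\ge1,\,0\le m\le n,\ n-m\le\ell}n^{-(1+\varepsilon)}R_{m,n}^p\Big]\le C_{p,\varepsilon}\,\ell^{1+p}.$$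
   Context: $(\Omega,\mathcal F,\mathbb P)$ is a probability space, $\theta:\Omega\to\Omega$ is invertible and $\mathbb P$-preserving, and $\mathcal F$ is generated by a stationary sequence $(X_j)_{j\in\mathbb Z}$ of random variables with $X_j\circ\theta=X_{j+1}$. For $k\ge1$, $\psi_U(k)$ is the smallest number such that $\mathbb P(A\cap B)\le\mathbb P(A)\mathbb P(B)(1+\psi_U(k))$ for all $n\in\mathbb Z$, $A\in\sigma\{X_j:j\le n\}$ and $B\in\sigma\{X_j:j\ge n+k\}$ (it is nonincreasing in $k$). *)

theory Defs
  imports "HOL-Probability.Probability" "HOL-Library.Landau_Symbols"
begin

definition gen_sets :: "'a measure \<Rightarrow> 'b measure \<Rightarrow> (int \<Rightarrow> 'a \<Rightarrow> 'b) \<Rightarrow> int set \<Rightarrow> 'a set set" where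
  "gen_sets M N X J =
     sigma_sets (space M) (\<Union>j\<in>J. {X j -` A \<inter> space M | A. A \<in> sets N})"

text \<open>psi_U(k): smallest number c with P(A inter B) <= P(A) P(B) (1 + c) for all n,
  A in sigma{X_j : j <= n}, B in sigma{X_j : j >= n+k}; infinity if no such number exists.\<close>
definition psiU :: "'a measure \<Rightarrow> 'b measure \<Rightarrow> (int \<Rightarrow> 'a \<Rightarrow> 'b) \<Rightarrow> int \<Rightarrow> ereal" where
  "psiU M N X k = Inf (ereal ` {c::real. \<forall>n::int.
       \<forall>A\<in>gen_sets M N X {..n}. \<forall>B\<in>gen_sets M N X {n+k..}.
         measure M (A \<inter> B) \<le> measure M A * measure M B * (1 + c)})"

definition Rn :: "('a \<Rightarrow> 'a) \<Rightarrow> ('a \<Rightarrow> real) \<Rightarrow> nat \<Rightarrow> 'a \<Rightarrow> real" where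
  "Rn \<theta> \<rho> n \<omega> = (\<Sum>j<n. \<Prod>i\<in>{j..<n}. \<rho> ((\<theta> ^^ i) \<omega>))"

definition Rmn :: "('a \<Rightarrow> 'a) \<Rightarrow> ('a \<Rightarrow> real) \<Rightarrow> nat \<Rightarrow> nat \<Rightarrow> 'a \<Rightarrow> real" where
  "Rmn \<theta> \<rho> m n \<omega> = (\<Sum>k\<in>{m..n}. \<Sum>j\<in>{k..n}. \<Prod>i\<in>{k..j}. \<rho> ((\<theta> ^^ i) \<omega>))"

end

theory Submission
  imports Defs "HOL-Real_Asymp.Real_Asymp"
begin


lemma measurable_mono_sets:
  assumes "f \<in> measurable A C" "space A = space B" "sets A \<subseteq> sets B"
  shows "f \<in> measurable B C"
  using assms unfolding measurable_def by auto

locale mixsetting =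
  fixes M :: "'a measure" and N :: "'b measure"
    and X :: "int \<Rightarrow> 'a \<Rightarrow> 'b" and \<theta> :: "'a \<Rightarrow> 'a"
    and \<rho> :: "'a \<Rightarrow> real"
  assumes P: "prob_space M"
    and theta_meas: "\<theta> \<in> measurable M M"
    and theta_pres: "distr M M \<theta> = M"
    and X_meas: "\<And>j. X j \<in> measurable M N"
    and X_shift: "\<And>j \<omega>. \<omega> \<in> space M \<Longrightarrow> X j (\<theta> \<omega>) = X (j + 1) \<omega>"
    and gen: "sets M = gen_sets M N X UNIV"
    and rho_meas: "\<rho> \<in> borel_measurable M"
    and rho_range: "\<And>\<omega>. \<omega> \<in> space M \<Longrightarrow> 0 < \<rho> \<omega> \<and> \<rho> \<omega> < 1"
begin

sublocale prob_space M by (rule P)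

abbreviation G where "G J \<equiv> gen_sets M N X J"
abbreviation SG where "SG J \<equiv> sigma (space M) (gen_sets M N X J)"
abbreviation Gen where "Gen J \<equiv> (\<Union>j\<in>J. {X j -` A \<inter> space M | A. A \<in> sets N})"

lemma Gen_Pow: "Gen J \<subseteq> Pow (space M)" by blast

lemma G_mono: "J \<subseteq> J' \<Longrightarrow> G J \<subseteq> G J'"
  unfolding gen_sets_def by (rule sigma_sets_mono') auto

lemma G_sub: "G J \<subseteq> sets M"
proof -
  have "G J \<subseteq> G UNIV" by (rule G_mono) simp
  then show ?thesis unfolding gen .
qed

lemma G_Pow: "G J \<subseteq> Pow (space M)"
proof
  fix x assume "x \<in> G J"
  then have "x \<in> sets M" using G_sub by blast
  then show "x \<in> Pow (space M)" using sets.sets_into_space by blast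
qed

lemma sets_SG: "sets (SG J) = G J"
proof -
  have "sets (SG J) = sigma_sets (space M) (G J)" by (rule sets_measure_of[OF G_Pow])
  also have "\<dots> = G J" unfolding gen_sets_def by (rule sigma_sets_sigma_sets_eq[OF Gen_Pow])
  finally show ?thesis .
qed

lemma space_SG: "space (SG J) = space M"
  by (rule space_measure_of_conv)

lemma meas_SG_mono: "f \<in> measurable (SG J) K \<Longrightarrow> J \<subseteq> J' \<Longrightarrow> f \<in> measurable (SG J') K"
  by (rule measurable_mono_sets[of f "SG J" K "SG J'"]) (auto simp only: space_SG sets_SG dest: G_mono)

lemma meas_SG_M: "f \<in> measurable (SG J) K \<Longrightarrow> f \<in> measurable M K"
  by (rule measurable_mono_sets[of f "SG J" K M]) (auto simp only: space_SG sets_SG dest: G_sub[THEN subsetD])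

lemma theta_space: "\<omega> \<in> space M \<Longrightarrow> (\<theta>^^i) \<omega> \<in> space M"
  using measurable_space[OF measurable_compose_n[OF theta_meas]] by blast

lemma X_iter: "\<omega> \<in> space M \<Longrightarrow> X j ((\<theta>^^i) \<omega>) = X (j + int i) \<omega>"
proof (induction i arbitrary: j)
  case 0 then show ?case by simp
next
  case (Suc i)
  have "X j ((\<theta>^^Suc i) \<omega>) = X (j+1) ((\<theta>^^i) \<omega>)"
    using X_shift[OF theta_space[OF Suc.prems]] by simp
  also have "\<dots> = X (j + int (Suc i)) \<omega>" using Suc by (simp add: algebra_simps)
  finally show ?case .
qed

lemma shift_meas: "(\<theta>^^i) \<in> measurable (SG ((\<lambda>j. j + int i) ` J)) (SG J)"
proof (rule measurable_sigma_sets[OF _ Gen_Pow])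
  show "sets (SG J) = sigma_sets (space M) (Gen J)"
    by (subst sets_SG) (simp add: gen_sets_def)
  show "(\<theta>^^i) \<in> space (SG ((\<lambda>j. j + int i) ` J)) \<rightarrow> space M"
    using theta_space by (auto simp: space_SG)
  fix y assume "y \<in> Gen J"
  then obtain j A where jA: "j \<in> J" "A \<in> sets N" "y = X j -` A \<inter> space M" by auto
  have "(\<theta>^^i) -` y \<inter> space (SG ((\<lambda>j. j + int i) ` J)) = X (j + int i) -` A \<inter> space M"
    using jA(3) theta_space X_iter unfolding space_SG by auto
  also have "\<dots> \<in> Gen ((\<lambda>j. j + int i) ` J)"
  proof (rule UN_I)
    show "j + int i \<in> (\<lambda>j. j + int i) ` J" using jA(1) by (rule imageI)
    show "X (j + int i) -` A \<inter> space M \<in> {X (j + int i) -` A \<inter> space M |A. A \<in> sets N}" using jA(2) by blast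
  qed
  finally have "(\<theta>^^i) -` y \<inter> space (SG ((\<lambda>j. j + int i) ` J)) \<in> sigma_sets (space M) (Gen ((\<lambda>j. j + int i) ` J))"
    by (rule sigma_sets.Basic)
  then show "(\<theta>^^i) -` y \<inter> space (SG ((\<lambda>j. j + int i) ` J)) \<in> sets (SG ((\<lambda>j. j + int i) ` J))"
    by (subst sets_SG) (unfold gen_sets_def)
qed

lemma img_shift: "(\<lambda>j. j + int i) ` {a..b} = {a + int i..b + int i}"
proof -
  have "x \<in> (\<lambda>j. j + int i) ` {a..b}" if "x \<in> {a + int i..b + int i}" for x
    using that by (intro image_eqI[of _ _ "x - int i"]) auto
  then show ?thesis by auto
qed

lemma comp_shift:
  assumes "h \<in> borel_measurable (SG {-int r..int r})"
  shows "(\<lambda>\<omega>. h ((\<theta>^^i) \<omega>)) \<in> borel_measurable (SG {int i - int r..int i + int r})"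
proof -
  have "(\<theta>^^i) \<in> measurable (SG {int i - int r..int i + int r}) (SG {-int r..int r})"
    using shift_meas[of i "{-int r..int r}"] by (simp add: img_shift add.commute)
  from measurable_compose[OF this assms] show ?thesis by (simp add: comp_def)
qed

lemma distr_iter: "distr M M (\<theta>^^i) = M"
proof (induction i)
  case 0 then show ?case by (simp add: distr_id2[symmetric] id_def) 
next
  case (Suc i)
  have "distr M M (\<theta>^^Suc i) = distr M M (\<theta> \<circ> \<theta>^^i)" by (simp only: funpow.simps)
  also have "\<dots> = distr (distr M M (\<theta>^^i)) M \<theta>"
    by (rule distr_distr[symmetric, OF theta_meas measurable_compose_n[OF theta_meas]])
  also have "\<dots> = M" using Suc theta_pres by simp
  finally show ?case .
qed

lemma nn_integral_shift:
  assumes "f \<in> borel_measurable M"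
  shows "(\<integral>\<^sup>+\<omega>. f ((\<theta>^^i) \<omega>) \<partial>M) = integral\<^sup>N M f"
proof -
  have "integral\<^sup>N (distr M M (\<theta>^^i)) f = (\<integral>\<^sup>+\<omega>. f ((\<theta>^^i) \<omega>) \<partial>M)"
    by (rule nn_integral_distr) (use assms distr_iter measurable_compose_n[OF theta_meas] in auto)
  then show ?thesis using distr_iter by simp
qed

lemma AE_shift:
  assumes "AE \<omega> in M. Q \<omega>" "{\<omega>\<in>space M. Q \<omega>} \<in> sets M"
  shows "AE \<omega> in M. Q ((\<theta>^^i) \<omega>)"
proof -
  have "AE x in distr M M (\<theta>^^i). Q x" by (subst distr_iter) (rule assms(1))
  then show ?thesis using AE_distr_iff[OF measurable_compose_n[OF theta_meas] assms(2), of i] by simp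
qed

end


context mixsetting begin

lemma mix_ind:
  fixes C :: real and n s :: int and A :: "'a set" and g :: "'a \<Rightarrow> ennreal"
  assumes C: "0 \<le> C" and A: "A \<in> G {..n}"
    and mix: "\<And>B. B \<in> G {n+s..} \<Longrightarrow> measure M (A \<inter> B) \<le> measure M A * measure M B * C"
    and g: "g \<in> borel_measurable (SG {n+s..})"
  shows "(\<integral>\<^sup>+x. indicator A x * g x \<partial>M) \<le> ennreal C * emeasure M A * (\<integral>\<^sup>+x. g x \<partial>M)"
  using g
proof (induct g rule: borel_measurable_induct)
  case (cong f g)
  then have "\<And>x. x\<in>space M \<Longrightarrow> f x = g x" by (simp add: space_SG)
  then have "(\<integral>\<^sup>+x. indicator A x * f x \<partial>M) = (\<integral>\<^sup>+x. indicator A x * g x \<partial>M)"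
     "(\<integral>\<^sup>+x. f x \<partial>M) = (\<integral>\<^sup>+x. g x \<partial>M)"
    by (auto intro!: nn_integral_cong)
  with cong show ?case by simp
next
  case (set B)
  then have B: "B \<in> G {n+s..}" by (simp add: sets_SG)
  have AM: "A \<in> sets M" and BM: "B \<in> sets M" using A B G_sub by auto
  have "(\<integral>\<^sup>+x. indicator A x * indicator B x \<partial>M) = emeasure M (A \<inter> B)"
    using AM BM by (simp add: indicator_inter_arith[symmetric])
  also have "\<dots> = ennreal (measure M (A \<inter> B))" using emeasure_eq_measure by simp
  also have "\<dots> \<le> ennreal (measure M A * measure M B * C)" using mix[OF B] by (rule ennreal_leI)
  also have "\<dots> = ennreal C * emeasure M A * emeasure M B"
    using C by (simp add: emeasure_eq_measure ennreal_mult mult_ac)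
  finally show ?case using BM by simp
next
  case (mult u a)
  have um: "u \<in> borel_measurable M" using mult(2) by (rule meas_SG_M)
  have AM: "A \<in> sets M" using A G_sub by auto
  have m1: "(\<lambda>x. indicator A x * u x) \<in> borel_measurable M" using um AM by measurable
  have "(\<integral>\<^sup>+x. indicator A x * (a * u x) \<partial>M) = (\<integral>\<^sup>+x. a * (indicator A x * u x) \<partial>M)"
    by (simp add: mult_ac)
  also have "\<dots> = a * (\<integral>\<^sup>+x. indicator A x * u x \<partial>M)" using m1 by (rule nn_integral_cmult)
  also have "\<dots> \<le> a * (ennreal C * emeasure M A * (\<integral>\<^sup>+x. u x \<partial>M))"
    using mult(4) by (rule mult_left_mono) simp
  also have "\<dots> = ennreal C * emeasure M A * (\<integral>\<^sup>+x. a * u x \<partial>M)"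
    using um by (simp add: nn_integral_cmult mult_ac)
  finally show ?case .
next
  case (add u v)
  have um: "u \<in> borel_measurable M" using add(1) by (rule meas_SG_M)
  have vm: "v \<in> borel_measurable M" using add(4) by (rule meas_SG_M)
  have AM: "A \<in> sets M" using A G_sub by auto
  have "(\<integral>\<^sup>+x. indicator A x * (v x + u x) \<partial>M)
      = (\<integral>\<^sup>+x. indicator A x * v x \<partial>M) + (\<integral>\<^sup>+x. indicator A x * u x \<partial>M)"
    using um vm AM by (subst nn_integral_add[symmetric]) (auto simp: distrib_left)
  also have "\<dots> \<le> ennreal C * emeasure M A * (\<integral>\<^sup>+x. v x \<partial>M) + ennreal C * emeasure M A * (\<integral>\<^sup>+x. u x \<partial>M)"
    using add by (intro add_mono)
  also have "\<dots> = ennreal C * emeasure M A * (\<integral>\<^sup>+x. v x + u x \<partial>M)"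
    using um vm by (simp add: nn_integral_add distrib_left)
  finally show ?case .
next
  case (seq U)
  have Um: "\<And>i. U i \<in> borel_measurable M" using seq(1) by (rule meas_SG_M)
  have AM: "A \<in> sets M" using A G_sub by auto
  have inc: "incseq (\<lambda>i x. indicator A x * U i x)"
    using seq(4) by (auto simp: incseq_def le_fun_def intro!: mult_left_mono)
  have "(\<integral>\<^sup>+x. indicator A x * (SUP i. U i) x \<partial>M) = (\<integral>\<^sup>+x. (SUP i. indicator A x * U i x) \<partial>M)"
    by (simp add: SUP_mult_left_ennreal image_comp)
  also have "\<dots> = (SUP i. \<integral>\<^sup>+x. indicator A x * U i x \<partial>M)"
    by (rule nn_integral_monotone_convergence_SUP[OF inc]) (use Um AM in measurable)
  also have "\<dots> \<le> (SUP i. ennreal C * emeasure M A * (\<integral>\<^sup>+x. U i x \<partial>M))"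
    using seq(3) by (intro SUP_mono') 
  also have "\<dots> = ennreal C * emeasure M A * (SUP i. \<integral>\<^sup>+x. U i x \<partial>M)"
    by (simp add: SUP_mult_left_ennreal)
  also have "(SUP i. \<integral>\<^sup>+x. U i x \<partial>M) = (\<integral>\<^sup>+x. (SUP i. U i) x \<partial>M)"
    using nn_integral_monotone_convergence_SUP[OF seq(4) Um] by (simp add: image_comp)
  finally show ?case .
qed

lemma mix_fun:
  fixes C :: real and n s :: int and f g :: "'a \<Rightarrow> ennreal"
  assumes C: "0 \<le> C"
    and mix: "\<And>A B. A \<in> G {..n} \<Longrightarrow> B \<in> G {n+s..} \<Longrightarrow> measure M (A \<inter> B) \<le> measure M A * measure M B * C"
    and f: "f \<in> borel_measurable (SG {..n})" and g: "g \<in> borel_measurable (SG {n+s..})"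
  shows "(\<integral>\<^sup>+x. f x * g x \<partial>M) \<le> ennreal C * (\<integral>\<^sup>+x. f x \<partial>M) * (\<integral>\<^sup>+x. g x \<partial>M)"
proof -
  have "\<forall>g\<in>borel_measurable (SG {n+s..}). (\<integral>\<^sup>+x. f x * (g::'a\<Rightarrow>ennreal) x \<partial>M) \<le> ennreal C * (\<integral>\<^sup>+x. f x \<partial>M) * (\<integral>\<^sup>+x. g x \<partial>M)"
    using f
  proof (induct f rule: borel_measurable_induct)
    case (cong f f')
    then have "\<And>x. x\<in>space M \<Longrightarrow> f x = f' x" by (simp add: space_SG)
    then have "\<And>g. (\<integral>\<^sup>+x. f x * g x \<partial>M) = (\<integral>\<^sup>+x. f' x * g x \<partial>M)"
       "(\<integral>\<^sup>+x. f x \<partial>M) = (\<integral>\<^sup>+x. f' x \<partial>M)"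
      by (auto intro!: nn_integral_cong)
    with cong show ?case by simp
  next
    case (set A)
    show ?case
    proof
      fix g :: "'a \<Rightarrow> ennreal" assume g: "g \<in> borel_measurable (SG {n+s..})"
      have A: "A \<in> G {..n}" using set by (simp add: sets_SG)
      then have AM: "A \<in> sets M" using G_sub by auto
      have "(\<integral>\<^sup>+x. indicator A x * g x \<partial>M) \<le> ennreal C * emeasure M A * (\<integral>\<^sup>+x. g x \<partial>M)"
        by (rule mix_ind[OF C A mix[OF A] g])
      then show "(\<integral>\<^sup>+x. indicator A x * g x \<partial>M) \<le> ennreal C * (\<integral>\<^sup>+x. indicator A x \<partial>M) * (\<integral>\<^sup>+x. g x \<partial>M)"
        using AM by simp
    qed
  next
    case (mult u a)
    show ?case
    proof
      fix g :: "'a \<Rightarrow> ennreal" assume g: "g \<in> borel_measurable (SG {n+s..})"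
      have um: "u \<in> borel_measurable M" using mult(2) by (rule meas_SG_M)
      have gm: "g \<in> borel_measurable M" using g by (rule meas_SG_M)
      have m1: "(\<lambda>x. u x * g x) \<in> borel_measurable M" using um gm by measurable
      have "(\<integral>\<^sup>+x. a * u x * g x \<partial>M) = (\<integral>\<^sup>+x. a * (u x * g x) \<partial>M)"
        by (simp add: mult_ac)
      also have "\<dots> = a * (\<integral>\<^sup>+x. u x * g x \<partial>M)" using m1 by (rule nn_integral_cmult)
      also have "\<dots> \<le> a * (ennreal C * (\<integral>\<^sup>+x. u x \<partial>M) * (\<integral>\<^sup>+x. g x \<partial>M))"
        using mult(4) g by (intro mult_left_mono) auto
      also have "\<dots> = ennreal C * (\<integral>\<^sup>+x. a * u x \<partial>M) * (\<integral>\<^sup>+x. g x \<partial>M)"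
        using um by (simp add: nn_integral_cmult mult_ac)
      finally show "(\<integral>\<^sup>+x. a * u x * g x \<partial>M) \<le> ennreal C * (\<integral>\<^sup>+x. a * u x \<partial>M) * (\<integral>\<^sup>+x. g x \<partial>M)" .
    qed
  next
    case (add u v)
    show ?case
    proof
      fix g :: "'a \<Rightarrow> ennreal" assume g: "g \<in> borel_measurable (SG {n+s..})"
      have um: "u \<in> borel_measurable M" using add(1) by (rule meas_SG_M)
      have vm: "v \<in> borel_measurable M" using add(4) by (rule meas_SG_M)
      have gm: "g \<in> borel_measurable M" using g by (rule meas_SG_M)
      have "(\<integral>\<^sup>+x. (v x + u x) * g x \<partial>M)
          = (\<integral>\<^sup>+x. v x * g x \<partial>M) + (\<integral>\<^sup>+x. u x * g x \<partial>M)"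
        using um vm gm by (subst nn_integral_add[symmetric]) (auto simp: distrib_right)
      also have "\<dots> \<le> ennreal C * (\<integral>\<^sup>+x. v x \<partial>M) * (\<integral>\<^sup>+x. g x \<partial>M) + ennreal C * (\<integral>\<^sup>+x. u x \<partial>M) * (\<integral>\<^sup>+x. g x \<partial>M)"
        using add g by (intro add_mono) auto
      also have "\<dots> = ennreal C * (\<integral>\<^sup>+x. v x + u x \<partial>M) * (\<integral>\<^sup>+x. g x \<partial>M)"
        using um vm by (simp add: nn_integral_add distrib_left distrib_right)
      finally show "(\<integral>\<^sup>+x. (v x + u x) * g x \<partial>M) \<le> ennreal C * (\<integral>\<^sup>+x. v x + u x \<partial>M) * (\<integral>\<^sup>+x. g x \<partial>M)" .
    qed
  next
    case (seq U)
    show ?case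
    proof
      fix g :: "'a \<Rightarrow> ennreal" assume g: "g \<in> borel_measurable (SG {n+s..})"
      have Um: "\<And>i. U i \<in> borel_measurable M" using seq(1) by (rule meas_SG_M)
      have gm: "g \<in> borel_measurable M" using g by (rule meas_SG_M)
      have inc: "incseq (\<lambda>i x. U i x * g x)"
        using seq(4) by (auto simp: incseq_def le_fun_def intro!: mult_right_mono)
      have "(\<integral>\<^sup>+x. (SUP i. U i) x * g x \<partial>M) = (\<integral>\<^sup>+x. (SUP i. U i x * g x) \<partial>M)"
        by (simp add: SUP_mult_right_ennreal image_comp)
      also have "\<dots> = (SUP i. \<integral>\<^sup>+x. U i x * g x \<partial>M)"
        by (rule nn_integral_monotone_convergence_SUP[OF inc]) (use Um gm in measurable)
      also have "\<dots> \<le> (SUP i. ennreal C * (\<integral>\<^sup>+x. U i x \<partial>M) * (\<integral>\<^sup>+x. g x \<partial>M))"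
        using seq(3) g by (intro SUP_mono') blast
      also have "\<dots> = ennreal C * (SUP i. \<integral>\<^sup>+x. U i x \<partial>M) * (\<integral>\<^sup>+x. g x \<partial>M)"
        by (simp add: SUP_mult_left_ennreal SUP_mult_right_ennreal)
      also have "(SUP i. \<integral>\<^sup>+x. U i x \<partial>M) = (\<integral>\<^sup>+x. (SUP i. U i) x \<partial>M)"
        using nn_integral_monotone_convergence_SUP[OF seq(4) Um] by (simp add: image_comp)
      finally show "(\<integral>\<^sup>+x. (SUP i. U i) x * g x \<partial>M) \<le> ennreal C * (\<integral>\<^sup>+x. (SUP i. U i) x \<partial>M) * (\<integral>\<^sup>+x. g x \<partial>M)" .
    qed
  qed
  with g show ?thesis by blast
qed


lemma block_bound:
  fixes C :: real and s r L a :: nat and h :: "'a \<Rightarrow> ennreal"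
  assumes C: "0 \<le> C"
    and mix: "\<And>n A B. A \<in> G {..n} \<Longrightarrow> B \<in> G {n + int s..} \<Longrightarrow> measure M (A \<inter> B) \<le> measure M A * measure M B * C"
    and L: "L = s + 2*r"
    and h: "h \<in> borel_measurable (SG {-int r..int r})"
  shows "(\<lambda>\<omega>. \<Prod>k<K. h ((\<theta>^^(a + k*L)) \<omega>)) \<in> borel_measurable (SG {..int a + int K * int L - int L + int r})
       \<and> (\<integral>\<^sup>+\<omega>. (\<Prod>k<K. h ((\<theta>^^(a + k*L)) \<omega>)) \<partial>M) \<le> (ennreal C * integral\<^sup>N M h)^K"
proof (induction K)
  case 0
  show ?case by (simp add: emeasure_space_1)
next
  case (Suc K)
  define F where "F = (\<lambda>\<omega>. \<Prod>k<K. h ((\<theta>^^(a + k*L)) \<omega>))"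
  define H where "H = (\<lambda>\<omega>. h ((\<theta>^^(a + K*L)) \<omega>))"
  define n where "n = int a + int K * int L - int L + int r"
  have Fm: "F \<in> borel_measurable (SG {..n})" using Suc.IH unfolding F_def n_def by simp
  have Hm0: "H \<in> borel_measurable (SG {int (a+K*L) - int r..int (a+K*L) + int r})"
    unfolding H_def by (rule comp_shift[OF h])
  have Hm: "H \<in> borel_measurable (SG {n + int s..})"
    by (rule meas_SG_mono[OF Hm0]) (auto simp: n_def L algebra_simps)
  have Fm': "F \<in> borel_measurable (SG {..int a + int (Suc K) * int L - int L + int r})"
    by (rule meas_SG_mono[OF Fm]) (auto simp: n_def L algebra_simps)
  have Hm': "H \<in> borel_measurable (SG {..int a + int (Suc K) * int L - int L + int r})"
    by (rule meas_SG_mono[OF Hm0]) (auto simp: L algebra_simps)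
  have eq: "(\<lambda>\<omega>. \<Prod>k<Suc K. h ((\<theta>^^(a + k*L)) \<omega>)) = (\<lambda>\<omega>. F \<omega> * H \<omega>)"
    by (simp add: F_def H_def)
  have meas: "(\<lambda>\<omega>. F \<omega> * H \<omega>) \<in> borel_measurable (SG {..int a + int (Suc K) * int L - int L + int r})"
    using Fm' Hm' by (rule borel_measurable_times_ennreal)
  have hM: "h \<in> borel_measurable M" using h by (rule meas_SG_M)
  have "(\<integral>\<^sup>+\<omega>. F \<omega> * H \<omega> \<partial>M) \<le> ennreal C * (\<integral>\<^sup>+\<omega>. F \<omega> \<partial>M) * (\<integral>\<^sup>+\<omega>. H \<omega> \<partial>M)"
    by (rule mix_fun[where n=n and s="int s", OF C mix Fm Hm])
  also have "(\<integral>\<^sup>+\<omega>. H \<omega> \<partial>M) = integral\<^sup>N M h"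
    unfolding H_def by (rule nn_integral_shift[OF hM])
  also have "ennreal C * (\<integral>\<^sup>+\<omega>. F \<omega> \<partial>M) * integral\<^sup>N M h \<le> ennreal C * (ennreal C * integral\<^sup>N M h)^K * integral\<^sup>N M h"
    using Suc.IH unfolding F_def by (intro mult_right_mono mult_left_mono) auto
  also have "\<dots> = (ennreal C * integral\<^sup>N M h)^(Suc K)" by (simp add: mult_ac)
  finally show ?case using eq meas by simp
qed


lemma interval_decay:
  fixes C b lam :: real and s r L :: nat and \<rho>r :: "'a \<Rightarrow> real"
  assumes C: "0 \<le> C"
    and mix: "\<And>n A B. A \<in> G {..n} \<Longrightarrow> B \<in> G {n + int s..} \<Longrightarrow> measure M (A \<inter> B) \<le> measure M A * measure M B * C"
    and L: "L = s + 2*r" and s: "s \<ge> 1"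
    and rr: "\<rho>r \<in> borel_measurable (SG {-int r..int r})"
    and AEr: "AE \<omega> in M. \<forall>i. \<rho> ((\<theta>^^i) \<omega>) \<le> \<rho>r ((\<theta>^^i) \<omega>) + b"
    and lam: "ennreal C * (\<integral>\<^sup>+\<omega>. ennreal (\<rho>r \<omega> + b) \<partial>M) \<le> ennreal lam" "0 \<le> lam"
  shows "(\<integral>\<^sup>+\<omega>. ennreal (\<Prod>i\<in>{a..<a+d}. \<rho> ((\<theta>^^i) \<omega>)) \<partial>M) \<le> ennreal (lam ^ (d div L))"
proof -
  define K where "K = d div L"
  define h where "h = (\<lambda>\<omega>. ennreal (\<rho>r \<omega> + b))"
  have hm: "h \<in> borel_measurable (SG {-int r..int r})" unfolding h_def using rr by measurable
  have Lpos: "L > r" using L s by simp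
  have KL: "K * L \<le> d" unfolding K_def by (rule div_times_less_eq_dividend)
  have inj: "inj_on (\<lambda>k. a + r + k*L) {..<K}" using Lpos by (auto simp: inj_on_def)
  have sub: "(\<lambda>k. a + r + k*L) ` {..<K} \<subseteq> {a..<a+d}"
  proof clarify
    fix k assume "k < K"
    then have "Suc k * L \<le> K * L" by (intro mult_le_mono1) simp
    then show "a + r + k*L \<in> {a..<a+d}" using KL Lpos by simp
  qed
  have pt: "ennreal (\<Prod>i\<in>{a..<a+d}. \<rho> ((\<theta>^^i) \<omega>)) \<le> (\<Prod>k<K. h ((\<theta>^^((a + r) + k*L)) \<omega>))"
    if \<omega>: "\<omega> \<in> space M" and hyp: "\<forall>i. \<rho> ((\<theta>^^i) \<omega>) \<le> \<rho>r ((\<theta>^^i) \<omega>) + b" for \<omega>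
  proof -
    have r01: "0 < \<rho> ((\<theta>^^i) \<omega>) \<and> \<rho> ((\<theta>^^i) \<omega>) < 1" for i
      using rho_range[OF theta_space[OF \<omega>]] .
    have "(\<Prod>i\<in>{a..<a+d}. \<rho> ((\<theta>^^i) \<omega>))
        = (\<Prod>i\<in>(\<lambda>k. a + r + k*L) ` {..<K}. \<rho> ((\<theta>^^i) \<omega>)) * (\<Prod>i\<in>{a..<a+d} - (\<lambda>k. a + r + k*L) ` {..<K}. \<rho> ((\<theta>^^i) \<omega>))"
      using sub by (subst prod.subset_diff[of _ "{a..<a+d}"]) (auto simp: mult.commute)
    also have "\<dots> \<le> (\<Prod>i\<in>(\<lambda>k. a + r + k*L) ` {..<K}. \<rho> ((\<theta>^^i) \<omega>)) * 1"
      using r01 by (intro mult_left_mono prod_le_1 prod_nonneg) (auto intro: less_imp_le)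
    also have "\<dots> = (\<Prod>k<K. \<rho> ((\<theta>^^(a + r + k*L)) \<omega>))"
      using inj by (simp add: prod.reindex)
    also have "\<dots> \<le> (\<Prod>k<K. \<rho>r ((\<theta>^^(a + r + k*L)) \<omega>) + b)"
      using r01 hyp by (intro prod_mono) (auto intro: less_imp_le)
    finally have "ennreal (\<Prod>i\<in>{a..<a+d}. \<rho> ((\<theta>^^i) \<omega>)) \<le> ennreal (\<Prod>k<K. \<rho>r ((\<theta>^^(a + r + k*L)) \<omega>) + b)"
      by (rule ennreal_leI)
    also have "\<dots> = (\<Prod>k<K. h ((\<theta>^^((a + r) + k*L)) \<omega>))"
      unfolding h_def using r01 hyp
      by (subst prod_ennreal) (auto intro: order_trans[OF less_imp_le] simp: add.assoc)
    finally show ?thesis .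
  qed
  have "(\<integral>\<^sup>+\<omega>. ennreal (\<Prod>i\<in>{a..<a+d}. \<rho> ((\<theta>^^i) \<omega>)) \<partial>M) \<le> (\<integral>\<^sup>+\<omega>. (\<Prod>k<K. h ((\<theta>^^((a + r) + k*L)) \<omega>)) \<partial>M)"
  proof (rule nn_integral_mono_AE)
    show "AE \<omega> in M. ennreal (\<Prod>i\<in>{a..<a+d}. \<rho> ((\<theta>^^i) \<omega>)) \<le> (\<Prod>k<K. h ((\<theta>^^((a + r) + k*L)) \<omega>))"
      using AE_space AEr by eventually_elim (rule pt)
  qed
  also have "\<dots> \<le> (ennreal C * integral\<^sup>N M h)^K"
    using block_bound[OF C mix L hm, where K=K and a="a + r"] by simp
  also have "\<dots> \<le> (ennreal lam)^K"
    using lam unfolding h_def by (intro power_mono) auto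
  also have "\<dots> = ennreal (lam ^ (d div L))" using lam by (simp add: ennreal_power K_def)
  finally show ?thesis .
qed

end

lemma root_decay:
  fixes lam :: real and L d :: nat
  assumes "0 < lam" "lam < 1" "L \<ge> 1"
  shows "lam ^ (d div L) \<le> root L lam ^ d / lam"
proof -
  define k where "k = root L lam"
  have k0: "0 < k" "k < 1" using assms by (auto simp: k_def)
  have kL: "k ^ L = lam" using assms unfolding k_def by (simp add: real_root_pow_pos2)
  have dle: "d \<le> L * (d div L + 1)"
  proof -
    have e: "d div L * L + d mod L = d" by (rule div_mult_mod_eq)
    have "d mod L < L" using assms by simp
    moreover have "L * (d div L + 1) = d div L * L + L" by (simp add: algebra_simps)
    ultimately show ?thesis using e by linarith
  qed
  have "lam ^ (d div L) * lam = k ^ (L * (d div L + 1))"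
    by (simp add: power_mult kL[symmetric] power_add)
  also have "\<dots> \<le> k ^ d" using k0 dle by (intro power_decreasing) auto
  finally show ?thesis using assms by (simp add: k_def pos_le_divide_eq)
qed

lemma convex_pow_nonneg: "convex_on {0::real..} (\<lambda>x. x ^ n)"
proof (cases "even n")
  case True
  then show ?thesis using convex_on_subset[OF convex_power_even[OF True]] by blast
next
  case False
  then show ?thesis by (rule convex_power_odd)
qed

lemma wjensen:
  fixes x t :: "'i \<Rightarrow> real"
  assumes S: "finite S" "S \<noteq> {}" and x: "\<And>i. i \<in> S \<Longrightarrow> 0 \<le> x i" and t: "\<And>i. i \<in> S \<Longrightarrow> 0 < t i"
    and p: "p \<ge> 1"
  shows "(\<Sum>i\<in>S. x i) ^ p \<le> (\<Sum>i\<in>S. t i) ^ (p - 1) * (\<Sum>i\<in>S. x i ^ p / t i ^ (p - 1))"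
proof -
  define T where "T = (\<Sum>i\<in>S. t i)"
  have T: "T > 0" unfolding T_def using S t by (intro sum_pos) auto
  have w1: "(\<Sum>i\<in>S. t i / T) = 1" using T by (simp add: T_def sum_divide_distrib[symmetric])
  have "(\<lambda>x. x ^ p) (\<Sum>i\<in>S. (t i / T) *\<^sub>R (x i / t i)) \<le> (\<Sum>i\<in>S. (t i / T) * (\<lambda>x. x ^ p) (x i / t i))"
    by (rule convex_on_sum[where S=S and C="{0..}" and f="\<lambda>x. x^p" and a="\<lambda>i. t i / T" and y="\<lambda>i. x i / t i", OF S convex_pow_nonneg w1])
      (use T t x in \<open>auto intro: less_imp_le divide_nonneg_nonneg\<close>)
  then have "(\<Sum>i\<in>S. (t i / T) *\<^sub>R (x i / t i)) ^ p \<le> (\<Sum>i\<in>S. (t i / T) * (x i / t i) ^ p)"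
    by (simp only:)
  also have "(\<Sum>i\<in>S. (t i / T) *\<^sub>R (x i / t i)) = (\<Sum>i\<in>S. x i) / T"
  proof -
    have "(t i / T) *\<^sub>R (x i / t i) = x i / T" if "i \<in> S" for i
      using t[OF that] by simp
    then show ?thesis by (simp add: sum_divide_distrib)
  qed
  also have "(\<Sum>i\<in>S. (t i / T) * (x i / t i) ^ p) = (\<Sum>i\<in>S. x i ^ p / t i ^ (p - 1)) / T"
  proof -
    have "(t i / T) * (x i / t i) ^ p = (x i ^ p / t i ^ (p - 1)) / T" if "i \<in> S" for i
    proof -
      have tp: "t i ^ p = t i * t i ^ (p - 1)" using p by (simp add: power_eq_if)
      show ?thesis using t[OF that] T by (simp add: power_divide tp field_simps)
    qed
    then show ?thesis by (simp add: sum_divide_distrib)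
  qed
  finally have "((\<Sum>i\<in>S. x i) / T) ^ p \<le> (\<Sum>i\<in>S. x i ^ p / t i ^ (p - 1)) / T" .
  then have "(\<Sum>i\<in>S. x i) ^ p / T ^ p \<le> (\<Sum>i\<in>S. x i ^ p / t i ^ (p - 1)) / T"
    by (simp add: power_divide)
  then have "(\<Sum>i\<in>S. x i) ^ p \<le> (\<Sum>i\<in>S. x i ^ p / t i ^ (p - 1)) / T * T ^ p"
    using T by (simp add: pos_divide_le_eq)
  also have "\<dots> = T ^ (p - 1) * (\<Sum>i\<in>S. x i ^ p / t i ^ (p - 1))"
  proof -
    have "T ^ p = T * T ^ (p - 1)" using p by (simp add: power_eq_if)
    then show ?thesis using T by simp
  qed
  finally show ?thesis unfolding T_def .
qed

lemma geom_rev: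
  fixes x :: real
  assumes "0 \<le> x" "x < 1"
  shows "(\<Sum>j<n. x ^ (n - j)) \<le> 1 / (1 - x)"
proof -
  have "(\<Sum>j<n. x ^ (n - j)) = (\<Sum>j<n. x * x ^ (n - Suc j))"
    by (intro sum.cong) (auto simp: Suc_diff_Suc[symmetric])
  also have "\<dots> = x * (\<Sum>j<n. x ^ (n - Suc j))" by (simp add: sum_distrib_left)
  also have "(\<Sum>j<n. x ^ (n - Suc j)) = (\<Sum>j<n. x ^ j)" by (rule sum.nat_diff_reindex)
  also have "\<dots> = (1 - x ^ n) / (1 - x)" using assms by (simp add: sum_gp_strict)
  also have "x * ((1 - x ^ n) / (1 - x)) \<le> 1 * (1 / (1 - x))"
  proof (rule mult_mono)
    have "x ^ n \<le> 1" using assms by (intro power_le_one) auto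
    then show "0 \<le> (1 - x ^ n) / (1 - x)" using assms by (intro divide_nonneg_nonneg) auto
    show "(1 - x ^ n) / (1 - x) \<le> 1 / (1 - x)" using assms by (intro divide_right_mono) auto
  qed (use assms in auto)
  finally show ?thesis by simp
qed


context mixsetting begin

lemma x_meas: "(\<lambda>\<omega>. \<Prod>i\<in>I. \<rho> ((\<theta>^^i) \<omega>)) \<in> borel_measurable M"
proof -
  have "(\<lambda>\<omega>. \<rho> ((\<theta>^^i) \<omega>)) \<in> borel_measurable M" for i
    using measurable_compose[OF measurable_compose_n[OF theta_meas] rho_meas] by (simp add: comp_def)
  then show ?thesis by (rule borel_measurable_prod)
qed

lemma x01: "\<omega> \<in> space M \<Longrightarrow> 0 \<le> (\<Prod>i\<in>I. \<rho> ((\<theta>^^i) \<omega>)) \<and> (\<Prod>i\<in>I. \<rho> ((\<theta>^^i) \<omega>)) \<le> 1"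
proof -
  assume \<omega>: "\<omega> \<in> space M"
  have h: "0 \<le> \<rho> ((\<theta>^^i) \<omega>) \<and> \<rho> ((\<theta>^^i) \<omega>) \<le> 1" for i
    using rho_range[OF theta_space[OF \<omega>]] by (simp add: less_imp_le)
  show ?thesis using h by (simp add: prod_nonneg prod_le_1)
qed

lemma Rn_nonneg: "\<omega> \<in> space M \<Longrightarrow> 0 \<le> Rn \<theta> \<rho> n \<omega>"
  unfolding Rn_def using x01 by (intro sum_nonneg) blast

lemma Rn_meas: "Rn \<theta> \<rho> n \<in> borel_measurable M"
  unfolding Rn_def[abs_def] using x_meas by (rule borel_measurable_sum)

lemma moments:
  fixes Aa k :: real and p :: nat
  assumes decay: "\<And>a d. (\<integral>\<^sup>+\<omega>. ennreal (\<Prod>i\<in>{a..<a+d}. \<rho> ((\<theta>^^i) \<omega>)) \<partial>M) \<le> ennreal (Aa * k^d)"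
    and Aa: "0 \<le> Aa" and k: "0 < k" "k < 1" and p: "p \<ge> 1"
  shows "\<exists>Cp\<ge>0. \<forall>n. (\<integral>\<^sup>+\<omega>. ennreal ((Rn \<theta> \<rho> n \<omega>)^p) \<partial>M) \<le> ennreal Cp"
proof -
  define \<tau> where "\<tau> = (root p k + 1) / 2"
  have rk: "0 < root p k" "root p k < 1" using k p by auto
  have tau: "0 < \<tau>" "\<tau> < 1" "root p k < \<tau>" using rk by (auto simp: \<tau>_def)
  have "k = root p k ^ p" using k p by (simp add: real_root_pow_pos2)
  also have "\<dots> < \<tau> ^ p" using rk tau p by (intro power_strict_mono) auto
  finally have kt: "k < \<tau> ^ p" .
  have tp: "\<tau> ^ p \<le> \<tau> ^ (p - 1)" using tau by (intro power_decreasing) auto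
  define \<mu> where "\<mu> = k / \<tau> ^ (p - 1)"
  have tp0: "0 < \<tau> ^ (p - 1)" using tau by simp
  have mu: "0 \<le> \<mu>" "\<mu> < 1" using k kt tp tp0 by (auto simp: \<mu>_def)
  define T0 where "T0 = 1 / (1 - \<tau>)"
  have T0: "0 \<le> T0" using tau by (simp add: T0_def)
  define Cp where "Cp = T0 ^ (p - 1) * Aa / (1 - \<mu>)"
  have Cp: "0 \<le> Cp" using T0 Aa mu by (simp add: Cp_def)
  have "(\<integral>\<^sup>+\<omega>. ennreal ((Rn \<theta> \<rho> n \<omega>)^p) \<partial>M) \<le> ennreal Cp" for n
  proof (cases "n = 0")
    case True
    have "p \<noteq> 0" using p by simp
    then show ?thesis using True by (simp add: Rn_def power_0_left)
  next
    case False
    define x where "x j \<omega> = (\<Prod>i\<in>{j..<n}. \<rho> ((\<theta>^^i) \<omega>))" for j \<omega>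
    define t where "t j = \<tau> ^ (n - j)" for j
    define c where "c j = T0 ^ (p - 1) / t j ^ (p - 1)" for j
    have tpos: "0 < t j" for j using tau by (simp add: t_def)
    have cpos: "0 \<le> c j" for j using T0 tpos[of j] by (simp add: c_def less_imp_le)
    have Tle: "(\<Sum>j<n. t j) \<le> T0" unfolding t_def T0_def using tau by (intro geom_rev) auto
    have pt: "(Rn \<theta> \<rho> n \<omega>)^p \<le> (\<Sum>j<n. c j * x j \<omega>)" if \<omega>: "\<omega> \<in> space M" for \<omega>
    proof -
      have xx: "0 \<le> x j \<omega> \<and> x j \<omega> \<le> 1" for j unfolding x_def by (rule x01[OF \<omega>])
      have "(Rn \<theta> \<rho> n \<omega>)^p = (\<Sum>j<n. x j \<omega>)^p" by (simp add: Rn_def x_def)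
      also have "\<dots> \<le> (\<Sum>j<n. t j) ^ (p - 1) * (\<Sum>j<n. x j \<omega> ^ p / t j ^ (p - 1))"
        using False xx tpos p by (intro wjensen) auto
      also have "\<dots> \<le> T0 ^ (p - 1) * (\<Sum>j<n. x j \<omega> / t j ^ (p - 1))"
      proof (rule mult_mono)
        show "(\<Sum>j<n. t j) ^ (p - 1) \<le> T0 ^ (p - 1)"
          using Tle tpos by (intro power_mono sum_nonneg) (auto intro: less_imp_le)
        show "(\<Sum>j<n. x j \<omega> ^ p / t j ^ (p - 1)) \<le> (\<Sum>j<n. x j \<omega> / t j ^ (p - 1))"
        proof (rule sum_mono)
          fix j
          have "x j \<omega> ^ p \<le> x j \<omega> ^ 1" using xx[of j] p by (intro power_decreasing) auto
          then show "x j \<omega> ^ p / t j ^ (p - 1) \<le> x j \<omega> / t j ^ (p - 1)"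
            using tpos[of j] by (intro divide_right_mono) auto
        qed
      next
        show "0 \<le> T0 ^ (p - 1)" using T0 by simp
        show "0 \<le> (\<Sum>j<n. x j \<omega> ^ p / t j ^ (p - 1))"
        proof (intro sum_nonneg divide_nonneg_nonneg)
          fix j show "0 \<le> x j \<omega> ^ p" using xx[of j] by simp
          show "0 \<le> t j ^ (p - 1)" using tpos[of j] by simp
        qed
      qed
      also have "\<dots> = (\<Sum>j<n. c j * x j \<omega>)" by (simp add: sum_distrib_left c_def)
      finally show ?thesis .
    qed
    have "(\<integral>\<^sup>+\<omega>. ennreal ((Rn \<theta> \<rho> n \<omega>)^p) \<partial>M) \<le> (\<integral>\<^sup>+\<omega>. ennreal (\<Sum>j<n. c j * x j \<omega>) \<partial>M)"
      using pt by (intro nn_integral_mono ennreal_leI) auto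
    also have "\<dots> = (\<integral>\<^sup>+\<omega>. (\<Sum>j<n. ennreal (c j) * ennreal (x j \<omega>)) \<partial>M)"
    proof (rule nn_integral_cong)
      fix \<omega> assume \<omega>: "\<omega> \<in> space M"
      have xx: "0 \<le> x j \<omega>" for j unfolding x_def using x01[OF \<omega>] by blast
      show "ennreal (\<Sum>j<n. c j * x j \<omega>) = (\<Sum>j<n. ennreal (c j) * ennreal (x j \<omega>))"
        using xx cpos by (simp add: ennreal_mult[symmetric] sum_ennreal[symmetric] del: sum_ennreal)
    qed
    also have "\<dots> = (\<Sum>j<n. ennreal (c j) * (\<integral>\<^sup>+\<omega>. ennreal (x j \<omega>) \<partial>M))"
      using x_meas by (simp add: nn_integral_sum nn_integral_cmult x_def)
    also have "\<dots> \<le> (\<Sum>j<n. ennreal (c j) * ennreal (Aa * k ^ (n - j)))"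
    proof (rule sum_mono)
      fix j assume "j \<in> {..<n}"
      then have "{j..<j + (n - j)} = {j..<n}" by auto
      then have "(\<integral>\<^sup>+\<omega>. ennreal (x j \<omega>) \<partial>M) \<le> ennreal (Aa * k ^ (n - j))"
        using decay[of j "n - j"] by (simp add: x_def)
      then show "ennreal (c j) * (\<integral>\<^sup>+\<omega>. ennreal (x j \<omega>) \<partial>M) \<le> ennreal (c j) * ennreal (Aa * k ^ (n - j))"
        by (rule mult_left_mono) simp
    qed
    also have "\<dots> = ennreal (\<Sum>j<n. c j * (Aa * k ^ (n - j)))"
      using cpos Aa k by (simp add: ennreal_mult[symmetric] sum_ennreal[symmetric] del: sum_ennreal)
    also have "(\<Sum>j<n. c j * (Aa * k ^ (n - j))) = T0 ^ (p - 1) * Aa * (\<Sum>j<n. \<mu> ^ (n - j))"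
    proof -
      have "c j * (Aa * k ^ (n - j)) = T0 ^ (p - 1) * Aa * \<mu> ^ (n - j)" for j
      proof -
        have "t j ^ (p - 1) = (\<tau> ^ (p - 1)) ^ (n - j)"
          by (simp add: t_def power_mult[symmetric] mult.commute)
        then show ?thesis by (simp add: c_def \<mu>_def power_divide)
      qed
      then have "(\<Sum>j<n. c j * (Aa * k ^ (n - j))) = (\<Sum>j<n. T0 ^ (p - 1) * Aa * \<mu> ^ (n - j))"
        by (intro sum.cong) (simp_all only:)
      then show ?thesis by (simp add: sum_distrib_left)
    qed
    also have "ennreal (T0 ^ (p - 1) * Aa * (\<Sum>j<n. \<mu> ^ (n - j))) \<le> ennreal Cp"
    proof (rule ennreal_leI)
      have "(\<Sum>j<n. \<mu> ^ (n - j)) \<le> 1 / (1 - \<mu>)" using mu by (rule geom_rev)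
      then have "T0 ^ (p - 1) * Aa * (\<Sum>j<n. \<mu> ^ (n - j)) \<le> T0 ^ (p - 1) * Aa * (1 / (1 - \<mu>))"
        using T0 Aa by (intro mult_left_mono) auto
      then show "T0 ^ (p - 1) * Aa * (\<Sum>j<n. \<mu> ^ (n - j)) \<le> Cp" by (simp add: Cp_def)
    qed
    finally show ?thesis .
  qed
  then show ?thesis using Cp by blast
qed

end

context mixsetting begin

lemma rho_int: "integrable M \<rho>"
  by (rule integrable_const_bound[where B=1]) (use rho_range rho_meas in \<open>auto intro!: AE_I2 simp: less_imp_le\<close>)

lemma main_moments:
  fixes \<beta> :: "nat \<Rightarrow> real"
  assumes rho_approx: "\<And>r. r \<ge> 1 \<Longrightarrow> \<exists>\<rho>r.
           \<rho>r \<in> borel_measurable (sigma (space M) (gen_sets M N X {-int r..int r})) \<and>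
           (AE \<omega> in M. \<bar>\<rho> \<omega> - \<rho>r \<omega>\<bar> \<le> \<beta> r)"
    and beta_lim: "\<beta> \<longlonglongrightarrow> 0"
    and psi: "\<exists>s\<ge>1. psiU M N X s < ereal (1 / (\<integral>\<omega>. \<rho> \<omega> \<partial>M) - 1)"
    and p: "p \<ge> 1"
  shows "\<exists>Cp\<ge>0. \<forall>n. (\<integral>\<^sup>+\<omega>. ennreal ((Rn \<theta> \<rho> n \<omega>)^p) \<partial>M) \<le> ennreal Cp"
proof -
  define E where "E = (\<integral>\<omega>. \<rho> \<omega> \<partial>M)"
  obtain s :: int where s: "s \<ge> 1" "psiU M N X s < ereal (1 / E - 1)" using psi E_def by blast
  then obtain c where cS: "\<forall>n::int. \<forall>A\<in>G {..n}. \<forall>B\<in>G {n+s..}.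
         measure M (A \<inter> B) \<le> measure M A * measure M B * (1 + c)" and cl: "ereal c < ereal (1 / E - 1)"
    unfolding psiU_def by (auto simp: Inf_less_iff)
  have cl': "c < 1 / E - 1" using cl by simp
  have topG: "space M \<in> G J" for J unfolding gen_sets_def by (rule sigma_sets_top)
  have "measure M (space M \<inter> space M) \<le> measure M (space M) * measure M (space M) * (1 + c)"
    using cS topG by blast
  then have c0: "0 \<le> c" by (simp add: prob_space)
  have Epos: "E > 0"
  proof (rule ccontr)
    assume "\<not> E > 0"
    then have h: "1 / E \<le> 0" by (simp add: divide_nonpos_nonneg not_less)
    show False using cl' c0 h by linarith
  qed
  have cE: "(1 + c) * E < 1" using cl' Epos by (simp add: field_simps)
  define s' where "s' = nat s"
  have s': "s' \<ge> 1" "int s' = s" using s by (auto simp: s'_def)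
  define \<delta> where "\<delta> = (1 / (1 + c) - E) / 2"
  have \<delta>: "\<delta> > 0" using cE c0 by (simp add: \<delta>_def field_simps)
  obtain no where no: "\<forall>n\<ge>no. norm (\<beta> n - 0) < \<delta>" using LIMSEQ_D[OF beta_lim \<delta>] by blast
  define r where "r = max 1 no"
  have r: "r \<ge> 1" "\<bar>\<beta> r\<bar> < \<delta>" using no by (auto simp: r_def)
  obtain \<rho>r where rr: "\<rho>r \<in> borel_measurable (SG {-int r..int r})"
      and AEr: "AE \<omega> in M. \<bar>\<rho> \<omega> - \<rho>r \<omega>\<bar> \<le> \<beta> r"
    using rho_approx[OF r(1)] by blast
  define b where "b = \<bar>\<beta> r\<bar>"
  have b: "0 \<le> b" "b < \<delta>" using r by (auto simp: b_def)
  have rrM: "\<rho>r \<in> borel_measurable M" using rr by (rule meas_SG_M)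
  have AE1: "AE \<omega> in M. \<rho> \<omega> \<le> \<rho>r \<omega> + b" using AEr by eventually_elim (auto simp: b_def)
  have AEall: "AE \<omega> in M. \<forall>i. \<rho> ((\<theta>^^i) \<omega>) \<le> \<rho>r ((\<theta>^^i) \<omega>) + b"
  proof (subst AE_all_countable, intro allI)
    fix i
    show "AE \<omega> in M. \<rho> ((\<theta>^^i) \<omega>) \<le> \<rho>r ((\<theta>^^i) \<omega>) + b"
      by (rule AE_shift[OF AE1]) (use rrM rho_meas in measurable)
  qed
  have "(\<integral>\<^sup>+\<omega>. ennreal (\<rho>r \<omega> + b) \<partial>M) \<le> (\<integral>\<^sup>+\<omega>. ennreal (\<rho> \<omega> + 2 * b) \<partial>M)"
  proof (rule nn_integral_mono_AE)
    show "AE \<omega> in M. ennreal (\<rho>r \<omega> + b) \<le> ennreal (\<rho> \<omega> + 2 * b)"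
      using AEr
    proof eventually_elim
      case (elim \<omega>)
      then have "\<rho>r \<omega> + b \<le> \<rho> \<omega> + 2 * b" unfolding b_def by linarith
      then show ?case by (rule ennreal_leI)
    qed
  qed
  also have "\<dots> = ennreal (E + 2 * b)"
  proof -
    have int2: "integrable M (\<lambda>\<omega>. \<rho> \<omega> + 2 * b)" using rho_int by simp
    have "(\<integral>\<^sup>+\<omega>. ennreal (\<rho> \<omega> + 2 * b) \<partial>M) = ennreal (\<integral>\<omega>. \<rho> \<omega> + 2 * b \<partial>M)"
      by (rule nn_integral_eq_integral[OF int2]) (use rho_range b in \<open>auto intro!: AE_I2 simp: less_imp_le\<close>)
    also have "(\<integral>\<omega>. \<rho> \<omega> + 2 * b \<partial>M) = E + 2 * b"
      using rho_int by (simp add: E_def prob_space)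
    finally show ?thesis .
  qed
  finally have hint: "(\<integral>\<^sup>+\<omega>. ennreal (\<rho>r \<omega> + b) \<partial>M) \<le> ennreal (E + 2 * b)" .
  define lam0 where "lam0 = (1 + c) * (E + 2 * b)"
  have lam0: "0 \<le> lam0" "lam0 < 1"
  proof -
    show "0 \<le> lam0" using c0 Epos b by (simp add: lam0_def)
    have "(1 + c) * (E + 2 * b) < (1 + c) * (E + 2 * \<delta>)" using c0 b by (intro mult_strict_left_mono) auto
    also have "\<dots> = 1" using c0 by (simp add: \<delta>_def field_simps)
    finally show "lam0 < 1" by (simp add: lam0_def)
  qed
  define lam where "lam = (lam0 + 1) / 2"
  have lam: "0 < lam" "lam < 1" "lam0 \<le> lam" using lam0 by (auto simp: lam_def)
  have lamb: "ennreal (1 + c) * (\<integral>\<^sup>+\<omega>. ennreal (\<rho>r \<omega> + b) \<partial>M) \<le> ennreal lam"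
  proof -
    have "ennreal (1 + c) * (\<integral>\<^sup>+\<omega>. ennreal (\<rho>r \<omega> + b) \<partial>M) \<le> ennreal (1 + c) * ennreal (E + 2 * b)"
      using hint by (rule mult_left_mono) simp
    also have "\<dots> = ennreal lam0" unfolding lam0_def by (rule ennreal_mult'[symmetric]) (use c0 in simp)
    also have "\<dots> \<le> ennreal lam" using lam by (simp add: ennreal_leI)
    finally show ?thesis .
  qed
  define L where "L = s' + 2 * r"
  have L1: "L \<ge> 1" using s' by (simp add: L_def)
  have mix: "\<And>n A B. A \<in> G {..n} \<Longrightarrow> B \<in> G {n + int s'..} \<Longrightarrow> measure M (A \<inter> B) \<le> measure M A * measure M B * (1 + c)"
    using cS s'(2) by blast
  have decay: "(\<integral>\<^sup>+\<omega>. ennreal (\<Prod>i\<in>{a..<a+d}. \<rho> ((\<theta>^^i) \<omega>)) \<partial>M) \<le> ennreal (1 / lam * root L lam ^ d)" for a d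
  proof -
    have "(\<integral>\<^sup>+\<omega>. ennreal (\<Prod>i\<in>{a..<a+d}. \<rho> ((\<theta>^^i) \<omega>)) \<partial>M) \<le> ennreal (lam ^ (d div L))"
      by (rule interval_decay[where C="1+c" and s=s' and r=r and L=L, OF _ mix L_def s'(1) rr AEall lamb])
         (use c0 lam in auto)
    also have "\<dots> \<le> ennreal (1 / lam * root L lam ^ d)"
      using root_decay[OF lam(1,2) L1, of d] by (intro ennreal_leI) simp
    finally show ?thesis .
  qed
  show ?thesis
    by (rule moments[OF decay]) (use lam L1 p in \<open>auto intro: real_root_pos2\<close>)
qed

end

context mixsetting begin

lemma Rmn_meas: "Rmn \<theta> \<rho> m n \<in> borel_measurable M"
  unfolding Rmn_def[abs_def] by (intro borel_measurable_sum x_meas)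

lemma Rmn_nonneg: "\<omega> \<in> space M \<Longrightarrow> 0 \<le> Rmn \<theta> \<rho> m n \<omega>"
  unfolding Rmn_def using x01 by (intro sum_nonneg) blast

lemma Rmn_le:
  assumes \<omega>: "\<omega> \<in> space M"
  shows "Rmn \<theta> \<rho> m n \<omega> \<le> (\<Sum>j\<in>{m..n}. Rn \<theta> \<rho> (Suc j) \<omega>)"
proof -
  define P where "P k j = (\<Prod>i\<in>{k..j}. \<rho> ((\<theta>^^i) \<omega>))" for k j
  have P0: "0 \<le> P k j" for k j unfolding P_def using x01[OF \<omega>] by blast
  have "Rmn \<theta> \<rho> m n \<omega> = (\<Sum>k\<in>{m..n}. \<Sum>j\<in>{j. j \<in> {m..n} \<and> k \<le> j}. P k j)"
    unfolding Rmn_def P_def by (intro sum.cong refl) auto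
  also have "\<dots> = (\<Sum>j\<in>{m..n}. \<Sum>k\<in>{k. k \<in> {m..n} \<and> k \<le> j}. P k j)"
    by (rule sum.swap_restrict) auto
  also have "\<dots> \<le> (\<Sum>j\<in>{m..n}. Rn \<theta> \<rho> (Suc j) \<omega>)"
  proof (rule sum_mono)
    fix j
    have "(\<Sum>k\<in>{k. k \<in> {m..n} \<and> k \<le> j}. P k j) \<le> (\<Sum>k\<in>{..<Suc j}. P k j)"
      using P0 by (intro sum_mono2) auto
    also have "\<dots> = Rn \<theta> \<rho> (Suc j) \<omega>"
      unfolding Rn_def P_def by (intro sum.cong refl prod.cong) auto
    finally show "(\<Sum>k\<in>{k. k \<in> {m..n} \<and> k \<le> j}. P k j) \<le> Rn \<theta> \<rho> (Suc j) \<omega>" .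
  qed
  finally show ?thesis .
qed

lemma sum_const_ennreal: "0 \<le> (Y::real) \<Longrightarrow> (\<Sum>m\<in>A. ennreal Y) = ennreal (real (card A) * Y)"
  by (simp add: ennreal_of_nat_eq_real_of_nat ennreal_mult)

lemma Rmn_moment:
  assumes mom: "\<And>n. (\<integral>\<^sup>+\<omega>. ennreal ((Rn \<theta> \<rho> n \<omega>)^p) \<partial>M) \<le> ennreal Cp"
    and p: "p \<ge> 1" and Cp: "0 \<le> Cp"
  shows "(\<integral>\<^sup>+\<omega>. ennreal ((Rmn \<theta> \<rho> m n \<omega>)^p) \<partial>M) \<le> ennreal (real (card {m..n}) ^ p * Cp)"
proof (cases "m \<le> n")
  case False
  then have "Rmn \<theta> \<rho> m n \<omega> = 0" for \<omega> by (simp add: Rmn_def)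
  then show ?thesis using p by (simp add: power_0_left)
next
  case True
  define S where "S = {m..n}"
  have S: "finite S" "S \<noteq> {}" using True by (auto simp: S_def)
  define cd where "cd = real (card S)"
  have cd: "0 \<le> cd" by (simp add: cd_def)
  have pt: "(Rmn \<theta> \<rho> m n \<omega>)^p \<le> cd ^ (p - 1) * (\<Sum>j\<in>S. (Rn \<theta> \<rho> (Suc j) \<omega>)^p)"
    if \<omega>: "\<omega> \<in> space M" for \<omega>
  proof -
    have "(Rmn \<theta> \<rho> m n \<omega>)^p \<le> (\<Sum>j\<in>S. Rn \<theta> \<rho> (Suc j) \<omega>)^p"
      unfolding S_def using Rmn_le[OF \<omega>] Rmn_nonneg[OF \<omega>] by (intro power_mono) auto
    also have "\<dots> \<le> (\<Sum>j\<in>S. 1) ^ (p - 1) * (\<Sum>j\<in>S. (Rn \<theta> \<rho> (Suc j) \<omega>)^p / 1 ^ (p - 1))"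
      by (rule wjensen[OF S _ _ p]) (use Rn_nonneg[OF \<omega>] in auto)
    finally show ?thesis by (simp add: cd_def)
  qed
  have Rm: "(\<lambda>\<omega>. ennreal ((Rn \<theta> \<rho> (Suc j) \<omega>)^p)) \<in> borel_measurable M" for j
    using Rn_meas by measurable
  have "(\<integral>\<^sup>+\<omega>. ennreal ((Rmn \<theta> \<rho> m n \<omega>)^p) \<partial>M) \<le> (\<integral>\<^sup>+\<omega>. ennreal (cd ^ (p - 1) * (\<Sum>j\<in>S. (Rn \<theta> \<rho> (Suc j) \<omega>)^p)) \<partial>M)"
    using pt by (intro nn_integral_mono ennreal_leI) auto
  also have "\<dots> = (\<integral>\<^sup>+\<omega>. ennreal (cd ^ (p - 1)) * (\<Sum>j\<in>S. ennreal ((Rn \<theta> \<rho> (Suc j) \<omega>)^p)) \<partial>M)"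
  proof (rule nn_integral_cong)
    fix \<omega> assume \<omega>: "\<omega> \<in> space M"
    have "0 \<le> (Rn \<theta> \<rho> (Suc j) \<omega>)^p" for j using Rn_nonneg[OF \<omega>] by simp
    then show "ennreal (cd ^ (p - 1) * (\<Sum>j\<in>S. (Rn \<theta> \<rho> (Suc j) \<omega>)^p)) = ennreal (cd ^ (p - 1)) * (\<Sum>j\<in>S. ennreal ((Rn \<theta> \<rho> (Suc j) \<omega>)^p))"
      using cd by (simp add: ennreal_mult sum_nonneg)
  qed
  also have "\<dots> = ennreal (cd ^ (p - 1)) * (\<Sum>j\<in>S. \<integral>\<^sup>+\<omega>. ennreal ((Rn \<theta> \<rho> (Suc j) \<omega>)^p) \<partial>M)"
    using Rm by (simp add: nn_integral_cmult nn_integral_sum)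
  also have "\<dots> \<le> ennreal (cd ^ (p - 1)) * (\<Sum>j\<in>S. ennreal Cp)"
    by (intro mult_left_mono sum_mono mom) simp
  also have "(\<Sum>j\<in>S. ennreal Cp) = ennreal (cd * Cp)"
    unfolding cd_def by (rule sum_const_ennreal[OF Cp])
  also have "ennreal (cd ^ (p - 1)) * ennreal (cd * Cp) = ennreal (cd ^ (p - 1) * (cd * Cp))"
    using cd Cp by (simp add: ennreal_mult)
  also have "cd ^ (p - 1) * (cd * Cp) = cd ^ p * Cp"
  proof -
    have "cd ^ p = cd * cd ^ (p - 1)" using p by (simp add: power_eq_if)
    then show ?thesis by simp
  qed
  finally show ?thesis by (simp add: cd_def S_def)
qed

lemma part3:
  assumes mom: "\<And>n. (\<integral>\<^sup>+\<omega>. ennreal ((Rn \<theta> \<rho> n \<omega>)^p) \<partial>M) \<le> ennreal Cp"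
    and p: "p \<ge> 1" and Cp: "0 \<le> Cp" and \<epsilon>: "\<epsilon> > 0"
  shows "\<exists>C::real. \<forall>l::nat. l \<ge> 1 \<longrightarrow>
            (\<integral>\<^sup>+ \<omega>. (SUP nm\<in>{(n, m). 1 \<le> n \<and> m \<le> n \<and> n - m \<le> l}.
                ennreal (real (fst nm) powr (-(1 + \<epsilon>)) * (Rmn \<theta> \<rho> (snd nm) (fst nm) \<omega>) ^ p)) \<partial>M)
              \<le> ennreal (C * real l ^ (1 + p))"
proof -
  define a where "a n = real n powr (-(1 + \<epsilon>))" for n :: nat
  have sa: "summable a" unfolding a_def using \<epsilon> by (subst summable_real_powr_iff) simp
  have a0: "0 \<le> a n" for n by (simp add: a_def)
  define Z where "Z = suminf a"
  have Z: "0 \<le> Z" unfolding Z_def using sa a0 by (intro suminf_nonneg) auto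
  define C where "C = 2 ^ (1 + p) * Cp * Z"
  have "(\<integral>\<^sup>+ \<omega>. (SUP nm\<in>{(n, m). 1 \<le> n \<and> m \<le> n \<and> n - m \<le> l}.
                ennreal (real (fst nm) powr (-(1 + \<epsilon>)) * (Rmn \<theta> \<rho> (snd nm) (fst nm) \<omega>) ^ p)) \<partial>M)
              \<le> ennreal (C * real l ^ (1 + p))" if l: "l \<ge> 1" for l :: nat
  proof -
    define f where "f n \<omega> = (\<Sum>m\<in>{n-l..n}. ennreal (a n * (Rmn \<theta> \<rho> m n \<omega>)^p))" for n \<omega>
    have fm: "f n \<in> borel_measurable M" for n
      unfolding f_def[abs_def] using Rmn_meas by measurable
    have step1: "(SUP nm\<in>{(n, m). 1 \<le> n \<and> m \<le> n \<and> n - m \<le> l}.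
                ennreal (real (fst nm) powr (-(1 + \<epsilon>)) * (Rmn \<theta> \<rho> (snd nm) (fst nm) \<omega>) ^ p)) \<le> (\<Sum>n. f n \<omega>)" for \<omega>
    proof (rule SUP_least)
      fix nm assume "nm \<in> {(n, m). 1 \<le> n \<and> m \<le> n \<and> n - m \<le> l}"
      then obtain n m where nm: "nm = (n, m)" "m \<le> n" "n - m \<le> l" by auto
      have "ennreal (a n * (Rmn \<theta> \<rho> m n \<omega>)^p) \<le> f n \<omega>"
        unfolding f_def using nm by (intro member_le_sum) auto
      also have "f n \<omega> = (\<Sum>i\<in>{n}. f i \<omega>)" by simp
      also have "\<dots> \<le> (\<Sum>i. f i \<omega>)" by (intro sum_le_suminf) auto
      finally show "ennreal (real (fst nm) powr (-(1 + \<epsilon>)) * (Rmn \<theta> \<rho> (snd nm) (fst nm) \<omega>) ^ p) \<le> (\<Sum>n. f n \<omega>)"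
        using nm by (simp add: a_def)
    qed
    have step3: "integral\<^sup>N M (f n) \<le> ennreal (real (Suc l) ^ (Suc p) * Cp * a n)" for n
    proof -
      have "integral\<^sup>N M (f n) = (\<Sum>m\<in>{n-l..n}. \<integral>\<^sup>+\<omega>. ennreal (a n) * ennreal ((Rmn \<theta> \<rho> m n \<omega>)^p) \<partial>M)"
        unfolding f_def using Rmn_meas a0 by (subst nn_integral_sum) (auto simp: ennreal_mult')
      also have "\<dots> = (\<Sum>m\<in>{n-l..n}. ennreal (a n) * \<integral>\<^sup>+\<omega>. ennreal ((Rmn \<theta> \<rho> m n \<omega>)^p) \<partial>M)"
        using Rmn_meas by (intro sum.cong refl nn_integral_cmult) measurable
      also have "\<dots> \<le> (\<Sum>m\<in>{n-l..n}. ennreal (a n) * ennreal (real (Suc l) ^ p * Cp))"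
      proof (intro sum_mono mult_left_mono)
        fix m assume m: "m \<in> {n-l..n}"
        have "(\<integral>\<^sup>+\<omega>. ennreal ((Rmn \<theta> \<rho> m n \<omega>)^p) \<partial>M) \<le> ennreal (real (card {m..n}) ^ p * Cp)"
          by (rule Rmn_moment[OF mom p Cp])
        also have "\<dots> \<le> ennreal (real (Suc l) ^ p * Cp)"
          using m Cp by (intro ennreal_leI mult_right_mono power_mono) auto
        finally show "(\<integral>\<^sup>+\<omega>. ennreal ((Rmn \<theta> \<rho> m n \<omega>)^p) \<partial>M) \<le> ennreal (real (Suc l) ^ p * Cp)" .
      qed simp
      also have "\<dots> = (\<Sum>m\<in>{n-l..n}. ennreal (a n * (real (Suc l) ^ p * Cp)))"
        using a0 Cp by (simp add: ennreal_mult)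
      also have "\<dots> = ennreal (real (card {n-l..n}) * (a n * (real (Suc l) ^ p * Cp)))"
        by (rule sum_const_ennreal) (use a0 Cp in simp)
      also have "\<dots> \<le> ennreal (real (Suc l) ^ (Suc p) * Cp * a n)"
      proof (rule ennreal_leI)
        have "real (card {n-l..n}) \<le> real (Suc l)" by simp
        then have "real (card {n-l..n}) * (a n * (real (Suc l) ^ p * Cp)) \<le> real (Suc l) * (a n * (real (Suc l) ^ p * Cp))"
          using a0 Cp by (intro mult_right_mono) auto
        then show "real (card {n-l..n}) * (a n * (real (Suc l) ^ p * Cp)) \<le> real (Suc l) ^ (Suc p) * Cp * a n"
          by (simp add: mult_ac)
      qed
      finally show ?thesis .
    qed
    have "(\<integral>\<^sup>+ \<omega>. (SUP nm\<in>{(n, m). 1 \<le> n \<and> m \<le> n \<and> n - m \<le> l}.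
                ennreal (real (fst nm) powr (-(1 + \<epsilon>)) * (Rmn \<theta> \<rho> (snd nm) (fst nm) \<omega>) ^ p)) \<partial>M)
        \<le> (\<integral>\<^sup>+\<omega>. (\<Sum>n. f n \<omega>) \<partial>M)"
      by (intro nn_integral_mono step1)
    also have "\<dots> = (\<Sum>n. integral\<^sup>N M (f n))" using fm by (rule nn_integral_suminf)
    also have "\<dots> \<le> (\<Sum>n. ennreal (real (Suc l) ^ (Suc p) * Cp * a n))"
      by (intro suminf_le step3) auto
    also have "\<dots> = ennreal (\<Sum>n. real (Suc l) ^ (Suc p) * Cp * a n)"
      using Cp a0 sa by (intro suminf_ennreal2 summable_mult) auto
    also have "(\<Sum>n. real (Suc l) ^ (Suc p) * Cp * a n) = real (Suc l) ^ (Suc p) * Cp * Z"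
      unfolding Z_def using sa by (rule suminf_mult)
    also have "ennreal (real (Suc l) ^ (Suc p) * Cp * Z) \<le> ennreal (C * real l ^ (1 + p))"
    proof (rule ennreal_leI)
      have "real (Suc l) ^ (Suc p) \<le> (2 * real l) ^ (Suc p)" using l by (intro power_mono) auto
      then have "real (Suc l) ^ (Suc p) * (Cp * Z) \<le> (2 * real l) ^ (Suc p) * (Cp * Z)"
        using Cp Z by (intro mult_right_mono) auto
      then show "real (Suc l) ^ (Suc p) * Cp * Z \<le> C * real l ^ (1 + p)"
        by (simp add: C_def power_mult_distrib mult_ac)
    qed
    finally show ?thesis .
  qed
  then show ?thesis by blast
qed

end


lemma rootfree:
  fixes R w B :: real
  assumes "0 \<le> R" "0 < w" "q \<ge> 1" "R ^ q \<le> B * w ^ q"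
  shows "R \<le> max 1 B * w"
proof (cases "R \<le> w")
  case True
  then show ?thesis using assms by (smt (verit) mult_le_cancel_right1)
next
  case False
  have "R * w ^ (q - 1) \<le> R * R ^ (q - 1)" using False assms by (intro mult_left_mono power_mono) auto
  also have "R * R ^ (q - 1) = R ^ q" using assms by (simp add: power_eq_if)
  also have "\<dots> \<le> B * w ^ q" by fact
  also have "B * w ^ q = (B * w) * w ^ (q - 1)" using assms by (simp add: power_eq_if)
  finally have "R \<le> B * w" using assms by simp
  also have "\<dots> \<le> max 1 B * w" using assms by (intro mult_right_mono) auto
  finally show ?thesis .
qed

context mixsetting begin

lemma part2:
  assumes mom: "\<And>p. p \<ge> 1 \<Longrightarrow> \<exists>Cp\<ge>0. \<forall>n. (\<integral>\<^sup>+\<omega>. ennreal ((Rn \<theta> \<rho> n \<omega>)^p) \<partial>M) \<le> ennreal Cp"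
    and \<epsilon>: "\<epsilon> > 0"
  shows "AE \<omega> in M. (\<lambda>n. Rn \<theta> \<rho> n \<omega>) \<in> o(\<lambda>n. real n powr \<epsilon>)"
proof -
  define q where "q = nat \<lceil>2 / \<epsilon>\<rceil> + 1"
  have q1: "q \<ge> 1" by (simp add: q_def)
  have "2 / \<epsilon> \<le> real (nat \<lceil>2 / \<epsilon>\<rceil>)" by linarith
  then have "2 / \<epsilon> < real q" by (simp add: q_def)
  then have "(2 / \<epsilon>) * (\<epsilon> / 2) < real q * (\<epsilon> / 2)" using \<epsilon> by (intro mult_strict_right_mono) auto
  then have qe: "1 < real q * (\<epsilon> / 2)" using \<epsilon> by simp
  obtain Cq where Cq: "0 \<le> Cq" "\<And>n. (\<integral>\<^sup>+\<omega>. ennreal ((Rn \<theta> \<rho> n \<omega>)^q) \<partial>M) \<le> ennreal Cq"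
    using mom[OF q1] by blast
  define e where "e = real q * (\<epsilon> / 2)"
  define a where "a n = real n powr (-e)" for n :: nat
  have sa: "summable a" unfolding a_def using qe by (subst summable_real_powr_iff) (simp add: e_def)
  have a0: "0 \<le> a n" for n by (simp add: a_def)
  define V where "V \<omega> = (\<Sum>n. ennreal (a n * (Rn \<theta> \<rho> n \<omega>)^q))" for \<omega>
  have tm: "(\<lambda>\<omega>. ennreal (a n * (Rn \<theta> \<rho> n \<omega>)^q)) \<in> borel_measurable M" for n
    using Rn_meas by measurable
  have Vm: "V \<in> borel_measurable M" unfolding V_def[abs_def] using tm by measurable
  have "integral\<^sup>N M V = (\<Sum>n. \<integral>\<^sup>+\<omega>. ennreal (a n * (Rn \<theta> \<rho> n \<omega>)^q) \<partial>M)"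
    unfolding V_def using tm by (rule nn_integral_suminf)
  also have "\<dots> = (\<Sum>n. ennreal (a n) * \<integral>\<^sup>+\<omega>. ennreal ((Rn \<theta> \<rho> n \<omega>)^q) \<partial>M)"
    using Rn_meas a0 by (intro suminf_cong) (simp add: ennreal_mult' nn_integral_cmult)
  also have "\<dots> \<le> (\<Sum>n. ennreal (a n * Cq))"
    using Cq a0 by (intro suminf_le) (auto simp: ennreal_mult' intro: mult_left_mono)
  also have "\<dots> = ennreal (\<Sum>n. a n * Cq)"
    using Cq a0 sa by (intro suminf_ennreal2 summable_mult2) auto
  finally have "integral\<^sup>N M V \<noteq> \<infinity>" by (auto simp: top_unique)
  then have AEV: "AE \<omega> in M. V \<omega> \<noteq> \<infinity>" using nn_integral_PInf_AE[OF Vm] by blast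
  show ?thesis
    using AE_space AEV
  proof eventually_elim
    case (elim \<omega>)
    define B where "B = enn2real (V \<omega>)"
    have VB: "V \<omega> = ennreal B" using elim by (simp add: B_def less_top)
    have B0: "0 \<le> B" by (simp add: B_def)
    have bd: "Rn \<theta> \<rho> n \<omega> \<le> max 1 B * real n powr (\<epsilon> / 2)" if n: "n \<ge> 1" for n
    proof -
      have "ennreal (a n * (Rn \<theta> \<rho> n \<omega>)^q) = (\<Sum>i\<in>{n}. ennreal (a i * (Rn \<theta> \<rho> i \<omega>)^q))" by simp
      also have "\<dots> \<le> V \<omega>" unfolding V_def by (intro sum_le_suminf) auto
      finally have "a n * (Rn \<theta> \<rho> n \<omega>)^q \<le> B" using VB B0 by simp
      moreover have "a n = 1 / (real n powr (\<epsilon> / 2)) ^ q"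
      proof -
        have "(real n powr (\<epsilon> / 2)) ^ q = (real n powr (\<epsilon> / 2)) powr (real q)"
          using n by (simp add: powr_realpow)
        also have "\<dots> = real n powr e" by (simp add: powr_powr e_def mult.commute)
        finally show ?thesis by (simp add: a_def powr_minus_divide)
      qed
      ultimately have h: "(Rn \<theta> \<rho> n \<omega>)^q \<le> B * (real n powr (\<epsilon> / 2)) ^ q"
        using n by (simp add: divide_le_eq mult.commute)
      show ?thesis
        by (rule rootfree[OF Rn_nonneg[OF elim(1)] _ q1 h]) (use n in simp)
    qed
    have "(\<lambda>n. Rn \<theta> \<rho> n \<omega>) \<in> O(\<lambda>n. real n powr (\<epsilon> / 2))"
    proof (rule bigoI)
      show "\<forall>\<^sub>F n in at_top. norm (Rn \<theta> \<rho> n \<omega>) \<le> max 1 B * norm (real n powr (\<epsilon> / 2))"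
        using eventually_ge_at_top[of "1::nat"]
        by eventually_elim (use bd Rn_nonneg[OF elim(1)] in auto)
    qed
    moreover have "(\<lambda>n::nat. real n powr (\<epsilon> / 2)) \<in> o(\<lambda>n. real n powr \<epsilon>)"
      using \<epsilon> by real_asymp
    ultimately show ?case by (rule landau_o.big_small_trans)
  qed
qed

end

theorem mainTheorem15:
  fixes M :: "'a measure" and N :: "'b measure"
    and X :: "int \<Rightarrow> 'a \<Rightarrow> 'b" and \<theta> :: "'a \<Rightarrow> 'a"
    and \<rho> :: "'a \<Rightarrow> real" and \<beta> :: "nat \<Rightarrow> real"
  assumes P: "prob_space M"
    and theta_meas: "\<theta> \<in> measurable M M"
    and theta_bij: "bij_betw \<theta> (space M) (space M)"
    and theta_inv_meas: "the_inv_into (space M) \<theta> \<in> measurable M M"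
    and theta_pres: "distr M M \<theta> = M"
    and X_meas: "\<And>j. X j \<in> measurable M N"
    and X_shift: "\<And>j \<omega>. \<omega> \<in> space M \<Longrightarrow> X j (\<theta> \<omega>) = X (j + 1) \<omega>"
    and gen: "sets M = gen_sets M N X UNIV"
    and rho_meas: "\<rho> \<in> borel_measurable M"
    and rho_range: "\<And>\<omega>. \<omega> \<in> space M \<Longrightarrow> 0 < \<rho> \<omega> \<and> \<rho> \<omega> < 1"
    and rho_approx: "\<And>r. r \<ge> 1 \<Longrightarrow> \<exists>\<rho>r.
           \<rho>r \<in> borel_measurable (sigma (space M) (gen_sets M N X {-int r..int r})) \<and>
           (AE \<omega> in M. \<bar>\<rho> \<omega> - \<rho>r \<omega>\<bar> \<le> \<beta> r)"
    and beta_lim: "\<beta> \<longlonglongrightarrow> 0"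
    and psi: "\<exists>s\<ge>1. psiU M N X s < ereal (1 / (\<integral>\<omega>. \<rho> \<omega> \<partial>M) - 1)"
  shows "(\<forall>p::nat. p \<ge> 1 \<longrightarrow> (\<exists>C::real. \<forall>n. (\<integral>\<omega>. (Rn \<theta> \<rho> n \<omega>) ^ p \<partial>M) \<le> C))
       \<and> (\<forall>\<epsilon>::real. \<epsilon> > 0 \<longrightarrow>
            (AE \<omega> in M. (\<lambda>n. Rn \<theta> \<rho> n \<omega>) \<in> o(\<lambda>n. real n powr \<epsilon>)))
       \<and> (\<forall>\<epsilon>::real. \<forall>p::nat. \<epsilon> > 0 \<longrightarrow> p \<ge> 1 \<longrightarrow> (\<exists>C::real. \<forall>l::nat. l \<ge> 1 \<longrightarrow>
            (\<integral>\<^sup>+ \<omega>. (SUP nm\<in>{(n, m). 1 \<le> n \<and> m \<le> n \<and> n - m \<le> l}.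
                ennreal (real (fst nm) powr (-(1 + \<epsilon>)) * (Rmn \<theta> \<rho> (snd nm) (fst nm) \<omega>) ^ p)) \<partial>M)
              \<le> ennreal (C * real l ^ (1 + p))))"
  proof -
  interpret mixsetting M N X \<theta> \<rho>
    using P theta_meas theta_pres X_meas X_shift gen rho_meas rho_range by (simp add: mixsetting_def)
  have mom: "\<exists>Cp\<ge>0. \<forall>n. (\<integral>\<^sup>+\<omega>. ennreal ((Rn \<theta> \<rho> n \<omega>)^p) \<partial>M) \<le> ennreal Cp" if "p \<ge> 1" for p
    by (rule main_moments[OF rho_approx beta_lim psi that])
  show ?thesis
  proof (intro conjI allI impI)
    fix p :: nat assume p: "p \<ge> 1"
    obtain Cp where Cp: "0 \<le> Cp" "\<And>n. (\<integral>\<^sup>+\<omega>. ennreal ((Rn \<theta> \<rho> n \<omega>)^p) \<partial>M) \<le> ennreal Cp"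
      using mom[OF p] by blast
    have "(\<integral>\<omega>. (Rn \<theta> \<rho> n \<omega>) ^ p \<partial>M) \<le> Cp" for n
      by (rule integral_real_bounded[OF Cp(1) Cp(2)])
    then show "\<exists>C::real. \<forall>n. (\<integral>\<omega>. (Rn \<theta> \<rho> n \<omega>) ^ p \<partial>M) \<le> C" by blast
  next
    fix \<epsilon> :: real assume "\<epsilon> > 0"
    then show "AE \<omega> in M. (\<lambda>n. Rn \<theta> \<rho> n \<omega>) \<in> o(\<lambda>n. real n powr \<epsilon>)"
      using part2[OF mom]
      by blast
  next
    fix \<epsilon> :: real and p :: nat assume \<epsilon>: "\<epsilon> > 0" and p: "p \<ge> 1"
    obtain Cp where Cp: "0 \<le> Cp" "\<And>n. (\<integral>\<^sup>+\<omega>. ennreal ((Rn \<theta> \<rho> n \<omega>)^p) \<partial>M) \<le> ennreal Cp"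
      using mom[OF p] by blast
    show "\<exists>C::real. \<forall>l::nat. l \<ge> 1 \<longrightarrow>
            (\<integral>\<^sup>+ \<omega>. (SUP nm\<in>{(n, m). 1 \<le> n \<and> m \<le> n \<and> n - m \<le> l}.
                ennreal (real (fst nm) powr (-(1 + \<epsilon>)) * (Rmn \<theta> \<rho> (snd nm) (fst nm) \<omega>) ^ p)) \<partial>M)
              \<le> ennreal (C * real l ^ (1 + p))"
      by (rule part3[OF Cp(2) p Cp(1) \<epsilon>])
  qed
qed

end
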